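(* Let $(X,d)$ be a bicomplete quasi-pseudometric space. Let $J:X\to X$ be a continuous single-valued map such that $r\,d(x,y)\le d(Jx,Jy)$ for all $x,y\in X$, for some constant $r>0$. Let $F:X\to CB(X)$ be a set-valued map such that $$H(Fx,Fy)\le \alpha\big[d(Jx,Fy)+d(Fx,Jy)\big]\quad\text{for all }x,y\in X,$$ where $0<\alpha<1/2$ and $2r\alpha<1$. Then there exists a unique $x_0\in X$ which is both a startpoint and an endpoint of $J$ and $F$ if and only if $J$ and $F$ have the approximate mix-point property.
   Context: A quasi-pseudometric on a nonempty set $X$ is a map $d:X\times X\to[0,\infty)$ with $d(x,x)=0$ and $d(x,z)\le d(x,y)+d(y,z)$ for all $x,y,z$; it is $T_0$ if $d(x,y)=0=d(y,x)$ implies $x=y$. Write $d^s(x,y)=\max\{d(x,y),d(y,x)\}$. The space $(X,d)$ is bicomplete if $d$ is $T_0$ and the metric $d^s$ is complete. For $x\in X$ and nonempty $A\subseteq X$: $d(x,A)=\inf_{a\in A}d(x,a)$, $d(A,x)=\inf_{a\in A}d(a,x)$. For nonempty $A,B\subseteq X$: $H(A,B)=\max\{\sup_{a\in A}d(a,B),\ \sup_{b\in B}d(A,b)\}$. $CB(X)$ denotes the family of nonempty $d^s$-bounded, $\tau(d^s)$-closed subsets of $X$; continuity of $J$ is with respect to $\tau(d^s)$. For $J:X\to X$ and $F:X\to 2^X$, a point $x$ is a startpoint of $J$ and $F$ if $H(\{Jx\},Fx)=0$ and an endpoint of $J$ and $F$ if $H(Fx,\{Jx\})=0$. $J$ and $F$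 have the approximate mix-point property if $\inf_{x\in X}\sup_{y\in Fx}d^s(Jx,y)=0$. *)

theory Defs
  imports "HOL-Analysis.Analysis"
begin

definition quasi_pseudometric :: "('a \<Rightarrow> 'a \<Rightarrow> real) \<Rightarrow> bool" where
  "quasi_pseudometric d \<longleftrightarrow> (\<forall>x y. d x y \<ge> 0) \<and> (\<forall>x. d x x = 0) \<and>
     (\<forall>x y z. d x z \<le> d x y + d y z)"

definition T0_qpm :: "('a \<Rightarrow> 'a \<Rightarrow> real) \<Rightarrow> bool" where
  "T0_qpm d \<longleftrightarrow> (\<forall>x y. d x y = 0 \<and> d y x = 0 \<longrightarrow> x = y)"

definition sym_dist :: "('a \<Rightarrow> 'a \<Rightarrow> real) \<Rightarrow> 'a \<Rightarrow> 'a \<Rightarrow> real" where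
  "sym_dist d x y = max (d x y) (d y x)"

definition ds_complete :: "('a \<Rightarrow> 'a \<Rightarrow> real) \<Rightarrow> bool" where
  "ds_complete d \<longleftrightarrow> (\<forall>s :: nat \<Rightarrow> 'a.
     (\<forall>e>0. \<exists>N. \<forall>m\<ge>N. \<forall>n\<ge>N. sym_dist d (s m) (s n) < e) \<longrightarrow>
     (\<exists>l. \<forall>e>0. \<exists>N. \<forall>n\<ge>N. sym_dist d (s n) l < e))"

definition bicomplete :: "('a \<Rightarrow> 'a \<Rightarrow> real) \<Rightarrow> bool" where
  "bicomplete d \<longleftrightarrow> T0_qpm d \<and> ds_complete d"

definition ds_closed :: "('a \<Rightarrow> 'a \<Rightarrow> real) \<Rightarrow> 'a set \<Rightarrow> bool" where
  "ds_closed d A \<longleftrightarrow> (\<forall>x. (\<forall>e>0. \<exists>a\<in>A. sym_dist d x a < e) \<longrightarrow> x \<in> A)"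

definition ds_bounded :: "('a \<Rightarrow> 'a \<Rightarrow> real) \<Rightarrow> 'a set \<Rightarrow> bool" where
  "ds_bounded d A \<longleftrightarrow> (\<exists>M. \<forall>a\<in>A. \<forall>b\<in>A. sym_dist d a b \<le> M)"

definition CB :: "('a \<Rightarrow> 'a \<Rightarrow> real) \<Rightarrow> 'a set set" where
  "CB d = {A. A \<noteq> {} \<and> ds_bounded d A \<and> ds_closed d A}"

definition ds_continuous :: "('a \<Rightarrow> 'a \<Rightarrow> real) \<Rightarrow> ('a \<Rightarrow> 'a) \<Rightarrow> bool" where
  "ds_continuous d J \<longleftrightarrow> (\<forall>x. \<forall>e>0. \<exists>\<delta>>0. \<forall>y. sym_dist d x y < \<delta> \<longrightarrow> sym_dist d (J x) (J y) < e)"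

definition pt_set_dist :: "('a \<Rightarrow> 'a \<Rightarrow> real) \<Rightarrow> 'a \<Rightarrow> 'a set \<Rightarrow> real" where
  "pt_set_dist d x A = (INF a\<in>A. d x a)"

definition set_pt_dist :: "('a \<Rightarrow> 'a \<Rightarrow> real) \<Rightarrow> 'a set \<Rightarrow> 'a \<Rightarrow> real" where
  "set_pt_dist d A x = (INF a\<in>A. d a x)"

definition hausdorff_qpm :: "('a \<Rightarrow> 'a \<Rightarrow> real) \<Rightarrow> 'a set \<Rightarrow> 'a set \<Rightarrow> real" where
  "hausdorff_qpm d A B = max (SUP a\<in>A. pt_set_dist d a B) (SUP b\<in>B. set_pt_dist d A b)"

definition startpoint :: "('a \<Rightarrow> 'a \<Rightarrow> real) \<Rightarrow> ('a \<Rightarrow> 'a) \<Rightarrow> ('a \<Rightarrow> 'a set) \<Rightarrow> 'a \<Rightarrow> bool" where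
  "startpoint d J F x \<longleftrightarrow> hausdorff_qpm d {J x} (F x) = 0"

definition endpoint :: "('a \<Rightarrow> 'a \<Rightarrow> real) \<Rightarrow> ('a \<Rightarrow> 'a) \<Rightarrow> ('a \<Rightarrow> 'a set) \<Rightarrow> 'a \<Rightarrow> bool" where
  "endpoint d J F x \<longleftrightarrow> hausdorff_qpm d (F x) {J x} = 0"

definition approx_mix_point :: "('a \<Rightarrow> 'a \<Rightarrow> real) \<Rightarrow> ('a \<Rightarrow> 'a) \<Rightarrow> ('a \<Rightarrow> 'a set) \<Rightarrow> bool" where
  "approx_mix_point d J F \<longleftrightarrow> (INF x. SUP y\<in>F x. sym_dist d (J x) y) = 0"

end

theory Submission
  imports Defs
begin

lemma qpm_nonneg: "quasi_pseudometric d \<Longrightarrow> d x y \<ge> 0"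
  by (simp add: quasi_pseudometric_def)
lemma qpm_refl: "quasi_pseudometric d \<Longrightarrow> d x x = 0"
  by (simp add: quasi_pseudometric_def)
lemma qpm_tri: "quasi_pseudometric d \<Longrightarrow> d x z \<le> d x y + d y z"
  by (simp add: quasi_pseudometric_def)

lemma sd_ge1: "d x y \<le> sym_dist d x y" and sd_ge2: "d y x \<le> sym_dist d x y"
  by (auto simp: sym_dist_def)
lemma sd_comm: "sym_dist d x y = sym_dist d y x"
  by (auto simp: sym_dist_def)
lemma sd_tri: "quasi_pseudometric d \<Longrightarrow> sym_dist d x z \<le> sym_dist d x y + sym_dist d y z"
  unfolding sym_dist_def using qpm_tri[where d=d and x=x and y=y and z=z] qpm_tri[where d=d and x=z and y=y and z=x] by auto
lemma sd_nonneg: "quasi_pseudometric d \<Longrightarrow> sym_dist d x y \<ge> 0"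
  using qpm_nonneg[of d x y] sd_ge1[of d x y] by linarith

lemma pt_le: "quasi_pseudometric d \<Longrightarrow> a \<in> A \<Longrightarrow> pt_set_dist d x A \<le> d x a"
  unfolding pt_set_dist_def
  by (rule cINF_lower) (auto intro!: bdd_belowI[of _ 0] simp: qpm_nonneg)
lemma spt_le: "quasi_pseudometric d \<Longrightarrow> a \<in> A \<Longrightarrow> set_pt_dist d A x \<le> d a x"
  unfolding set_pt_dist_def
  by (rule cINF_lower) (auto intro!: bdd_belowI[of _ 0] simp: qpm_nonneg)
lemma pt_ge: "A \<noteq> {} \<Longrightarrow> (\<And>a. a \<in> A \<Longrightarrow> c \<le> d x a) \<Longrightarrow> c \<le> pt_set_dist d x A"
  unfolding pt_set_dist_def by (rule cINF_greatest) auto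
lemma spt_ge: "A \<noteq> {} \<Longrightarrow> (\<And>a. a \<in> A \<Longrightarrow> c \<le> d a x) \<Longrightarrow> c \<le> set_pt_dist d A x"
  unfolding set_pt_dist_def by (rule cINF_greatest) auto

lemma pt_tri: assumes "quasi_pseudometric d" "A \<noteq> {}"
  shows "pt_set_dist d x A \<le> d x y + pt_set_dist d y A"
proof -
  have "pt_set_dist d x A - d x y \<le> pt_set_dist d y A"
    using assms(2) proof (rule pt_ge)
    fix a assume "a \<in> A"
    then show "pt_set_dist d x A - d x y \<le> d y a"
      using pt_le[OF assms(1), of a A x] qpm_tri[OF assms(1), of x a y] by linarith
  qed
  then show ?thesis by linarith
qed

lemma spt_tri: assumes "quasi_pseudometric d" "A \<noteq> {}"
  shows "set_pt_dist d A x \<le> set_pt_dist d A y + d y x"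
proof -
  have "set_pt_dist d A x - d y x \<le> set_pt_dist d A y"
    using assms(2) proof (rule spt_ge)
    fix a assume "a \<in> A"
    then show "set_pt_dist d A x - d y x \<le> d a y"
      using spt_le[OF assms(1), of a A x] qpm_tri[OF assms(1), of a x y] by linarith
  qed
  then show ?thesis by linarith
qed

lemma H_pt: assumes Q: "quasi_pseudometric d" and A: "ds_bounded d A" and B: "B \<noteq> {}"
  and a: "a \<in> A"
  shows "pt_set_dist d a B \<le> hausdorff_qpm d A B"
proof -
  obtain M where M: "\<forall>x\<in>A. \<forall>y\<in>A. sym_dist d x y \<le> M" using A by (auto simp: ds_bounded_def)
  obtain b0 where b0: "b0 \<in> B" using B by auto
  have "bdd_above ((\<lambda>a. pt_set_dist d a B) ` A)"
  proof (rule bdd_aboveI2)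
    fix x assume x: "x \<in> A"
    have "pt_set_dist d x B \<le> d x b0" using pt_le[OF Q b0] .
    also have "\<dots> \<le> d x a + d a b0" by (rule qpm_tri[OF Q])
    also have "\<dots> \<le> M + d a b0" using M x a sd_ge1[of d x a] by force
    finally show "pt_set_dist d x B \<le> M + d a b0" .
  qed
  then have "pt_set_dist d a B \<le> (SUP a\<in>A. pt_set_dist d a B)" by (rule cSUP_upper[OF a])
  then show ?thesis unfolding hausdorff_qpm_def by linarith
qed

lemma H_spt: assumes Q: "quasi_pseudometric d" and B: "ds_bounded d B" and A: "A \<noteq> {}"
  and b: "b \<in> B"
  shows "set_pt_dist d A b \<le> hausdorff_qpm d A B"
proof -
  obtain M where M: "\<forall>x\<in>B. \<forall>y\<in>B. sym_dist d x y \<le> M" using B by (auto simp: ds_bounded_def)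
  obtain a0 where a0: "a0 \<in> A" using A by auto
  have "bdd_above ((\<lambda>b. set_pt_dist d A b) ` B)"
  proof (rule bdd_aboveI2)
    fix x assume x: "x \<in> B"
    have "set_pt_dist d A x \<le> d a0 x" using spt_le[OF Q a0] .
    also have "\<dots> \<le> d a0 b + d b x" by (rule qpm_tri[OF Q])
    also have "\<dots> \<le> d a0 b + M" using M x b sd_ge1[of d b x] by force
    finally show "set_pt_dist d A x \<le> d a0 b + M" .
  qed
  then have "set_pt_dist d A b \<le> (SUP b\<in>B. set_pt_dist d A b)" by (rule cSUP_upper[OF b])
  then show ?thesis unfolding hausdorff_qpm_def by linarith
qed

lemma sup_sd: assumes Q: "quasi_pseudometric d" and B: "ds_bounded d B" and y: "y \<in> B"
  shows "sym_dist d x y \<le> (SUP y\<in>B. sym_dist d x y)"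
proof -
  obtain M where M: "\<forall>x\<in>B. \<forall>y\<in>B. sym_dist d x y \<le> M" using B by (auto simp: ds_bounded_def)
  have "bdd_above ((\<lambda>y. sym_dist d x y) ` B)"
  proof (rule bdd_aboveI2)
    fix z assume z: "z \<in> B"
    have "sym_dist d x z \<le> sym_dist d x y + sym_dist d y z" by (rule sd_tri[OF Q])
    also have "\<dots> \<le> sym_dist d x y + M" using M z y by force
    finally show "sym_dist d x z \<le> sym_dist d x y + M" .
  qed
  then show ?thesis by (rule cSUP_upper[OF y])
qed

lemma sing_bounded: "quasi_pseudometric d \<Longrightarrow> ds_bounded d {x}"
  unfolding ds_bounded_def by (rule exI[of _ 0]) (simp add: sym_dist_def qpm_refl)


lemma sp_ep_iff:
  assumes Q: "quasi_pseudometric d" and T: "T0_qpm d" and CB: "F x \<in> CB d"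
  shows "(startpoint d J F x \<and> endpoint d J F x) \<longleftrightarrow> F x = {J x}"
proof
  assume H: "startpoint d J F x \<and> endpoint d J F x"
  have ne: "F x \<noteq> {}" and bd: "ds_bounded d (F x)" using CB by (auto simp: CB_def)
  have "b = J x" if b: "b \<in> F x" for b
  proof -
    have "set_pt_dist d {J x} b \<le> 0"
      using H_spt[OF Q bd _ b, of "{J x}"] H by (simp add: startpoint_def)
    then have 1: "d (J x) b \<le> 0" by (simp add: set_pt_dist_def)
    have "pt_set_dist d b {J x} \<le> 0"
      using H_pt[OF Q bd _ b, of "{J x}"] H by (simp add: endpoint_def)
    then have 2: "d b (J x) \<le> 0" by (simp add: pt_set_dist_def)
    show ?thesis using T 1 2 qpm_nonneg[OF Q, of b "J x"] qpm_nonneg[OF Q, of "J x" b]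
      unfolding T0_qpm_def by force
  qed
  then show "F x = {J x}" using ne by auto
next
  assume "F x = {J x}"
  then show "startpoint d J F x \<and> endpoint d J F x"
    by (simp add: startpoint_def endpoint_def hausdorff_qpm_def pt_set_dist_def set_pt_dist_def qpm_refl[OF Q])
qed

lemma zero_lim: assumes "\<And>n. q \<le> t n" "\<And>\<epsilon>. \<epsilon> > 0 \<Longrightarrow> \<exists>n. t n < \<epsilon>"
  shows "q \<le> (0::real)"
proof (rule ccontr)
  assume "\<not> q \<le> 0"
  then obtain n where "t n < q" using assms(2)[of q] by auto
  then show False using assms(1)[of n] by auto
qed

lemma half_lemma: assumes "D \<le> \<alpha> * (D + D)" "\<alpha> < 1/2" shows "(D::real) \<le> 0"
proof (rule ccontr)
  assume "\<not> D \<le> 0"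
  then have "(1 - 2 * \<alpha>) * D > 0" using assms(2) by (intro mult_pos_pos) auto
  then show False using assms(1) by (simp add: algebra_simps)
qed

theorem mainTheorem8:
  fixes d :: "'a \<Rightarrow> 'a \<Rightarrow> real" and J :: "'a \<Rightarrow> 'a" and F :: "'a \<Rightarrow> 'a set"
    and r \<alpha> :: real
  assumes "quasi_pseudometric d" and "bicomplete d"
    and "ds_continuous d J"
    and "r > 0" and "\<And>x y. r * d x y \<le> d (J x) (J y)"
    and "\<And>x. F x \<in> CB d"
    and "\<And>x y. hausdorff_qpm d (F x) (F y)
                 \<le> \<alpha> * (pt_set_dist d (J x) (F y) + set_pt_dist d (F x) (J y))"
    and "0 < \<alpha>" and "\<alpha> < 1/2" and "2 * r * \<alpha> < 1"
  shows "(\<exists>!x0. startpoint d J F x0 \<and> endpoint d J F x0) \<longleftrightarrow> approx_mix_point d J F"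
proof -
  note Q = assms(1)
  have T: "T0_qpm d" and C: "ds_complete d" using assms(2) by (auto simp: bicomplete_def)
  note Jc = assms(3) and r = assms(4) and Jr = assms(5) and Hc = assms(7) and a0 = assms(8) and a1 = assms(9)
  have ne: "\<And>x. F x \<noteq> {}" and bd: "\<And>x. ds_bounded d (F x)" using assms(6) by (auto simp: CB_def)
  have iff: "\<And>x. (startpoint d J F x \<and> endpoint d J F x) \<longleftrightarrow> F x = {J x}"
    by (rule sp_ep_iff[OF Q T assms(6)])
  define e where "e x = (SUP y\<in>F x. sym_dist d (J x) y)" for x
  have e1: "d (J x) y \<le> e x" and e2: "d y (J x) \<le> e x" if "y \<in> F x" for x y
    using sup_sd[OF Q bd that, of "J x"] sd_ge1[of d "J x" y] sd_ge2[of d y "J x"]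
    unfolding e_def by linarith+
  have e0: "e x \<ge> 0" for x
  proof -
    obtain y where y: "y \<in> F x" using ne by blast
    show ?thesis using e1[OF y] qpm_nonneg[OF Q, of "J x" y] by linarith
  qed
  have amp: "approx_mix_point d J F \<longleftrightarrow> (INF x. e x) = 0"
    unfolding approx_mix_point_def e_def ..
  have uniq: "x = y" if "F x = {J x}" "F y = {J y}" for x y
  proof -
    have "d (J x) (J y) \<le> \<alpha> * (d (J x) (J y) + d (J x) (J y))"
      if "F x = {J x}" "F y = {J y}" for x y
      using Hc[of x y] that
      by (simp add: hausdorff_qpm_def pt_set_dist_def set_pt_dist_def)
    then have 1: "d (J x) (J y) \<le> 0" and 2: "d (J y) (J x) \<le> 0"
      using that a1 by (blast intro: half_lemma)+
    have "r * d x y \<le> 0" "r * d y x \<le> 0" using Jr[of x y] Jr[of y x] 1 2 by linarith+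
    then have "d x y \<le> 0" "d y x \<le> 0" using r by (simp_all add: mult_le_0_iff)
    then show ?thesis using T qpm_nonneg[OF Q, of x y] qpm_nonneg[OF Q, of y x]
      unfolding T0_qpm_def by force
  qed
  show ?thesis
  proof
    assume "\<exists>!x0. startpoint d J F x0 \<and> endpoint d J F x0"
    then obtain x0 where "F x0 = {J x0}" using iff by blast
    then have "e x0 = 0" unfolding e_def by (simp add: sym_dist_def qpm_refl[OF Q])
    moreover have "(INF x. e x) \<le> e x0"
      by (rule cINF_lower) (auto intro!: bdd_belowI[of _ 0] simp: e0)
    moreover have "(INF x. e x) \<ge> 0" by (rule cINF_greatest) (auto simp: e0)
    ultimately show "approx_mix_point d J F" unfolding amp by linarith
  next
    assume "approx_mix_point d J F"
    then have I0: "(INF x. e x) = 0" using amp by simp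
    have "\<exists>x. e x < 1 / (Suc n)" for n
    proof (rule ccontr)
      assume "\<not> ?thesis"
      then have "1 / Suc n \<le> (INF x. e x)" by (intro cINF_greatest) (auto simp: not_less)
      then show False using I0 by simp
    qed
    then obtain xs where xs: "\<And>n. e (xs n) < 1 / Suc n" by metis
    define K where "K = (1 + \<alpha>) / (1 - 2 * \<alpha>)"
    have K0: "K > 0" unfolding K_def using a0 a1 by auto
    have key: "d (J x) (J y) \<le> K * (e x + e y)" for x y
    proof -
      obtain a where a: "a \<in> F x" using ne by blast
      obtain b where b: "b \<in> F y" using ne by blast
      have "d (J x) (J y) - e x - e y \<le> pt_set_dist d a (F y)"
      proof (rule pt_ge[OF ne])
        fix c assume c: "c \<in> F y"
        show "d (J x) (J y) - e x - e y \<le> d a c"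
          using qpm_tri[OF Q, of "J x" "J y" a] qpm_tri[OF Q, of a "J y" c] e1[OF a] e2[OF c] by linarith
      qed
      also have "\<dots> \<le> hausdorff_qpm d (F x) (F y)" by (rule H_pt[OF Q bd ne a])
      also have "\<dots> \<le> \<alpha> * (pt_set_dist d (J x) (F y) + set_pt_dist d (F x) (J y))" by (rule Hc)
      also have "\<dots> \<le> \<alpha> * ((d (J x) (J y) + e y) + (e x + d (J x) (J y)))"
      proof -
        have "pt_set_dist d (J x) (F y) \<le> d (J x) (J y) + pt_set_dist d (J y) (F y)"
          by (rule pt_tri[OF Q ne])
        moreover have "pt_set_dist d (J y) (F y) \<le> e y" using pt_le[OF Q b] e1[OF b] by (smt (verit))
        moreover have "set_pt_dist d (F x) (J y) \<le> set_pt_dist d (F x) (J x) + d (J x) (J y)"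
          by (rule spt_tri[OF Q ne])
        moreover have "set_pt_dist d (F x) (J x) \<le> e x" using spt_le[OF Q a] e2[OF a] by (smt (verit))
        ultimately show ?thesis using a0 by (intro mult_left_mono) auto
      qed
      finally have "(1 - 2 * \<alpha>) * d (J x) (J y) \<le> (1 + \<alpha>) * (e x + e y)"
        by (simp add: algebra_simps)
      then show ?thesis unfolding K_def using a1 by (simp add: field_simps)
    qed
    have keys: "sym_dist d (J x) (J y) \<le> K * (e x + e y)" for x y
      using key[of x y] key[of y x] by (simp add: sym_dist_def add.commute)
    have xsd: "r * sym_dist d (xs m) (xs n) \<le> K * (1 / Suc m + 1 / Suc n)" for m n
    proof -
      have "r * sym_dist d (xs m) (xs n) \<le> sym_dist d (J (xs m)) (J (xs n))"
        using Jr[of "xs m" "xs n"] Jr[of "xs n" "xs m"] r by (simp add: sym_dist_def)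
      also have "\<dots> \<le> K * (e (xs m) + e (xs n))" by (rule keys)
      also have "\<dots> \<le> K * (1 / Suc m + 1 / Suc n)"
        using xs[of m] xs[of n] K0 by (intro mult_left_mono) auto
      finally show ?thesis .
    qed
    have small: "\<exists>N. \<forall>n\<ge>N. 1 / real (Suc n) < \<epsilon>" if ep: "\<epsilon> > 0" for \<epsilon>
    proof -
      obtain N where N: "1 / real (Suc N) < \<epsilon>"
        using nat_approx_posE[OF ep] by blast
      have "1 / real (Suc n) < \<epsilon>" if "n \<ge> N" for n
      proof -
        have "1 / real (Suc n) \<le> 1 / real (Suc N)" using that by (simp add: frac_le)
        then show ?thesis using N by linarith
      qed
      then show ?thesis by blast
    qed
    have cauchy: "\<forall>\<epsilon>>0. \<exists>N. \<forall>m\<ge>N. \<forall>n\<ge>N. sym_dist d (xs m) (xs n) < \<epsilon>"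
    proof (intro allI impI)
      fix \<epsilon> :: real assume \<epsilon>: "\<epsilon> > 0"
      have "r * \<epsilon> / (2 * K) > 0" using \<epsilon> r K0 by auto
      then obtain N where N: "\<And>n. n \<ge> N \<Longrightarrow> 1 / real (Suc n) < r * \<epsilon> / (2 * K)"
        using small by blast
      have "sym_dist d (xs m) (xs n) < \<epsilon>" if "m \<ge> N" "n \<ge> N" for m n
      proof -
        have "K * (1 / Suc m + 1 / Suc n) < K * (r * \<epsilon> / (2 * K) + r * \<epsilon> / (2 * K))"
          by (rule mult_strict_left_mono[OF add_strict_mono[OF N[OF that(1)] N[OF that(2)]] K0])
        also have "\<dots> = r * \<epsilon>" using K0 by (simp add: field_simps)
        finally have "r * sym_dist d (xs m) (xs n) < r * \<epsilon>" using xsd[of m n] by linarith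
        then show ?thesis using r by simp
      qed
      then show "\<exists>N. \<forall>m\<ge>N. \<forall>n\<ge>N. sym_dist d (xs m) (xs n) < \<epsilon>" by blast
    qed
    then obtain u where u: "\<And>\<epsilon>. \<epsilon> > 0 \<Longrightarrow> \<exists>N. \<forall>n\<ge>N. sym_dist d (xs n) u < \<epsilon>"
      using C unfolding ds_complete_def by blast
    define s where "s n = sym_dist d (J u) (J (xs n))" for n
    have sconv: "\<exists>N. \<forall>n\<ge>N. s n < \<epsilon>" if ep: "\<epsilon> > 0" for \<epsilon>
    proof -
      obtain \<delta> where \<delta>: "\<delta> > 0" "\<And>y. sym_dist d u y < \<delta> \<Longrightarrow> sym_dist d (J u) (J y) < \<epsilon>"
        using Jc ep unfolding ds_continuous_def by blast
      obtain N where "\<forall>n\<ge>N. sym_dist d (xs n) u < \<delta>" using u \<delta>(1) by blast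
      then show ?thesis using \<delta>(2) unfolding s_def by (metis sd_comm)
    qed
    have s1: "d (J u) (J (xs n)) \<le> s n" and s2: "d (J (xs n)) (J u) \<le> s n" for n
      unfolding s_def by (rule sd_ge1, rule sd_ge2)
    define t where "t n = (1 + 2 * \<alpha>) * s n + (1 + \<alpha>) * e (xs n)" for n
    have tsmall: "\<exists>n. t n < \<epsilon>" if ep: "\<epsilon> > 0" for \<epsilon>
    proof -
      obtain N1 where N1: "\<forall>n\<ge>N1. s n < \<epsilon> / (2 * (1 + 2 * \<alpha>))"
        using sconv[of "\<epsilon> / (2 * (1 + 2 * \<alpha>))"] ep a0 by auto
      obtain N2 where N2: "\<forall>n\<ge>N2. 1 / real (Suc n) < \<epsilon> / (2 * (1 + \<alpha>))"
        using small[of "\<epsilon> / (2 * (1 + \<alpha>))"] ep a0 by auto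
      define n where "n = max N1 N2"
      have "s n < \<epsilon> / (2 * (1 + 2 * \<alpha>))" using N1 unfolding n_def by simp
      then have "(1 + 2 * \<alpha>) * s n < (1 + 2 * \<alpha>) * (\<epsilon> / (2 * (1 + 2 * \<alpha>)))"
        using a0 by (intro mult_strict_left_mono) auto
      also have "\<dots> = \<epsilon> / 2" using a0 by (simp add: field_simps)
      finally have A: "(1 + 2 * \<alpha>) * s n < \<epsilon> / 2" .
      have "e (xs n) < \<epsilon> / (2 * (1 + \<alpha>))" using N2[rule_format, of n] xs[of n] unfolding n_def by simp
      then have B: "(1 + \<alpha>) * e (xs n) < \<epsilon> / 2" using a0 by (simp add: field_simps)
      show ?thesis using A B unfolding t_def by (intro exI[of _ n]) linarith
    qed
    have Fu: "b = J u" if b: "b \<in> F u" for b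
    proof -
      have A: "(1 - \<alpha>) * d (J u) b \<le> t n" for n
      proof -
        let ?x = "xs n"
        have "d (J u) b - s n - e ?x \<le> set_pt_dist d (F ?x) b"
        proof (rule spt_ge[OF ne])
          fix c assume c: "c \<in> F ?x"
          show "d (J u) b - s n - e ?x \<le> d c b"
            using qpm_tri[OF Q, of "J u" b "J ?x"] qpm_tri[OF Q, of "J ?x" b c] e1[OF c] s1[of n] by linarith
        qed
        also have "\<dots> \<le> hausdorff_qpm d (F ?x) (F u)" by (rule H_spt[OF Q bd ne b])
        also have "\<dots> \<le> \<alpha> * (pt_set_dist d (J ?x) (F u) + set_pt_dist d (F ?x) (J u))" by (rule Hc)
        also have "\<dots> \<le> \<alpha> * ((s n + d (J u) b) + (e ?x + s n))"
        proof -
          have "pt_set_dist d (J ?x) (F u) \<le> d (J ?x) (J u) + pt_set_dist d (J u) (F u)"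
            by (rule pt_tri[OF Q ne])
          moreover have "pt_set_dist d (J u) (F u) \<le> d (J u) b" using pt_le[OF Q b] .
          moreover obtain c where c: "c \<in> F ?x" using ne by blast
          moreover have "set_pt_dist d (F ?x) (J u) \<le> set_pt_dist d (F ?x) (J ?x) + d (J ?x) (J u)"
            by (rule spt_tri[OF Q ne])
          moreover have "set_pt_dist d (F ?x) (J ?x) \<le> e ?x" using spt_le[OF Q c] e2[OF c] by (smt (verit))
          ultimately show ?thesis using a0 s2[of n] by (intro mult_left_mono) auto
        qed
        finally show ?thesis unfolding t_def by (simp add: algebra_simps)
      qed
      have "(1 - \<alpha>) * d (J u) b \<le> 0" by (rule zero_lim[OF A tsmall])
      then have 1: "d (J u) b \<le> 0" using a1 by (simp add: mult_le_0_iff)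
      have B: "(1 - \<alpha>) * d b (J u) \<le> t n" for n
      proof -
        let ?x = "xs n"
        have "d b (J u) - s n - e ?x \<le> pt_set_dist d b (F ?x)"
        proof (rule pt_ge[OF ne])
          fix c assume c: "c \<in> F ?x"
          show "d b (J u) - s n - e ?x \<le> d b c"
            using qpm_tri[OF Q, of b "J u" c] qpm_tri[OF Q, of c "J u" "J ?x"] e2[OF c] s2[of n] by linarith
        qed
        also have "\<dots> \<le> hausdorff_qpm d (F u) (F ?x)" by (rule H_pt[OF Q bd ne b])
        also have "\<dots> \<le> \<alpha> * (pt_set_dist d (J u) (F ?x) + set_pt_dist d (F u) (J ?x))" by (rule Hc)
        also have "\<dots> \<le> \<alpha> * ((s n + e ?x) + (d b (J u) + s n))"
        proof -
          obtain c where c: "c \<in> F ?x" using ne by blast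
          have "pt_set_dist d (J u) (F ?x) \<le> d (J u) (J ?x) + pt_set_dist d (J ?x) (F ?x)"
            by (rule pt_tri[OF Q ne])
          moreover have "pt_set_dist d (J ?x) (F ?x) \<le> e ?x" using pt_le[OF Q c] e1[OF c] by (smt (verit))
          moreover have "set_pt_dist d (F u) (J ?x) \<le> set_pt_dist d (F u) (J u) + d (J u) (J ?x)"
            by (rule spt_tri[OF Q ne])
          moreover have "set_pt_dist d (F u) (J u) \<le> d b (J u)" using spt_le[OF Q b] .
          ultimately show ?thesis using a0 s1[of n] by (intro mult_left_mono) auto
        qed
        finally show ?thesis unfolding t_def by (simp add: algebra_simps)
      qed
      have "(1 - \<alpha>) * d b (J u) \<le> 0" by (rule zero_lim[OF B tsmall])
      then have 2: "d b (J u) \<le> 0" using a1 by (simp add: mult_le_0_iff)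
      show ?thesis using T 1 2 qpm_nonneg[OF Q, of b "J u"] qpm_nonneg[OF Q, of "J u" b]
        unfolding T0_qpm_def by force
    qed
    have "F u = {J u}" using Fu ne[of u] by auto
    then show "\<exists>!x0. startpoint d J F x0 \<and> endpoint d J F x0"
      using iff uniq by blast
  qed
qed

end
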